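(* Let $r\ge 2$, let $\pi$ be a set partition of $\{1,\dots,r\}$ having $\{1\}$ as a block, with $k$ blocks, and let $c\in\mathcal{C}(\pi)$. In the construction of $\psi_\pi(c)$ described in the context: (i) at Stage 1, the trees $\tau_1,\dots,\tau_k$ are $\pi$-increasing and irreducible; (ii) for $i=2,\dots,k$, in the input to Stage $i$, the trees $\tau_i,\dots,\tau_k$ are $\pi$-increasing, irreducible, and contain $\mu_i,\dots,\mu_k$ respectively; and if $\tau_1$ has been created by an internal splice at some previous stage, then $\tau_1$ is $\pi$-increasing and reducible; (iii) the tree $\psi_\pi(c)$ is $\pi$-increasing and reducible.
   Context: The blocks of $\pi$ are $\pi_1,\dots,\pi_k$ with maxima $\mu_i=\max\pi_i$, indexed so that $1=\mu_1<\dots<\mu_k=r$ (so $\pi_1=\{1\}$); $\pi^x$ denotes the block containing $x$. $\mathcal{C}(\pi)=\{(c_2,\dots,c_{k-1}):1\le c_i\le\mu_i\}$. An unordered increasing tree is a rooted tree on distinct positive integers, sons unordered, each son larger than its father. A $\pi$-increasing tree is an unordered increasing tree $T$ whose vertex-set is a union of blocks of $\pi$ and such that for any two elements $i<j$ of a same block of $\pi$ contained in $V(T)$, $i$ is an ancestor of $j$ in $T$. $v$-decomposition: for a vertex $v$ of $T$ with chain $a_1<\dots<a_\ell=v$ from the root to $v$, removing the chain edges leaves components $T^{(a_j)}$ rooted at $a_j$. Splice: for unordered increasing trees $T_1,T_2$ with disjoint vertex-sets and $v_1\in V(T_1)$, $v_2\in V(T_2)$, $v_1>v_2$, $\mathrm{spl}(T_1,v_1;T_2,v_2)$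 is the tree on $V(T_1)\cup V(T_2)$ obtained by merging the root-to-$v_1$ chain of $T_1$ and the root-to-$v_2$ chain of $T_2$ into one increasing chain (ending at $v_1$) and attaching at each chain vertex its component from the $v_1$-decomposition of $T_1$ or the $v_2$-decomposition of $T_2$. $v$-dependence graph $G_v(T)$ of a $\pi$-increasing tree $T$: directed graph on the blocks of $\pi$ contained in $V(T)$; for each such block $\pi_i$ whose maximum $\mu_i$ is not on the chain from the root to $v$, $\mu_i$ is a non-root vertex of a unique $T^{(a_j)}$ and there is an edge (possibly a loop) $\pi_i\to\pi^{a_j}$. A $\pi$-increasing tree with maximum vertex $M$ is irreducible if $G_M(T)$ is connected (ignoring directions), reducible otherwise. Construction of $\psi_\pi(c)$: Stage 1: $\tau_\ell$ is the increasing chain on the elements of $\pi_\ell$ ($\ell=1,\dots,k$), and $\nu=1$. For $i=2,\dots,k-1$ (Stage $i$): if $c_i$ is a vertex of $\tau_1$ or $\tau_i$ (Case 1, an internal splice), replace $\tau_1$ by $\mathrm{spl}(\tau_i,\mu_i;\tau_1,\nu)$, discard $\tau_i$, set $\nu=c_i$; otherwise $c_i$ lies in some $\tau_j$, $j>i$ (Case 2, an external splice), replace $\tau_j$ by $\mathrm{spl}(\tau_i,\mu_i;\tau_j,c_i)$ and discard $\tau_i$. Stage $k$ (also an internal splice): $\psi_\pi(c)=\mathrm{spl}(\tau_k,\mu_k;\tau_1,\nu)$. *)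

theory Defs
  imports Main "HOL-Library.Disjoint_Sets"
begin

text \<open>A rooted tree on a finite set of positive integers, given by its vertex set and a
  parent function.  The parent function is normalised: it is 0 (not a vertex) at the root
  and outside the vertex set.\<close>
type_synonym tree = "nat set \<times> (nat \<Rightarrow> nat)"

definition verts :: "tree \<Rightarrow> nat set" where "verts T = fst T"
definition par :: "tree \<Rightarrow> nat \<Rightarrow> nat" where "par T = snd T"

definition inc_tree :: "tree \<Rightarrow> bool" where
  "inc_tree T \<longleftrightarrow> finite (verts T) \<and> verts T \<noteq> {} \<and> 0 \<notin> verts T \<and>
     par T (Min (verts T)) = 0 \<and>
     (\<forall>x \<in> verts T. x \<noteq> Min (verts T) \<longrightarrow> par T x \<in> verts T \<and> par T x < x) \<and>
     (\<forall>x. x \<notin> verts T \<longrightarrow> par T x = 0)"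

definition tedges :: "tree \<Rightarrow> (nat \<times> nat) set" where
  "tedges T = {(par T x, x) | x. x \<in> verts T \<and> x \<noteq> Min (verts T)}"

definition ancs :: "tree \<Rightarrow> nat \<Rightarrow> nat set" where
  "ancs T x = {a. (a, x) \<in> (tedges T)\<^sup>*}"

definition is_ancestor :: "tree \<Rightarrow> nat \<Rightarrow> nat \<Rightarrow> bool" where
  "is_ancestor T a x \<longleftrightarrow> x \<in> verts T \<and> a \<in> ancs T x"

text \<open>In the v-decomposition of T, the chain vertex whose component contains x
  (the deepest chain vertex that is an ancestor of x).\<close>
definition comp_root :: "tree \<Rightarrow> nat \<Rightarrow> nat \<Rightarrow> nat" where
  "comp_root T v x = Max (ancs T x \<inter> ancs T v)"

text \<open>Splice spl(T1,v1;T2,v2): the two root-to-v chains are merged into one increasing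
  chain; all other vertices keep their fathers (so the components of the decompositions
  stay attached at their chain vertices).\<close>
definition spl :: "tree \<Rightarrow> nat \<Rightarrow> tree \<Rightarrow> nat \<Rightarrow> tree" where
  "spl T1 v1 T2 v2 =
     (let C = ancs T1 v1 \<union> ancs T2 v2 in
      (verts T1 \<union> verts T2,
       \<lambda>x. if x \<in> C then (if x = Min C then 0 else Max {y \<in> C. y < x})
           else if x \<in> verts T1 then par T1 x
           else if x \<in> verts T2 then par T2 x else 0))"

definition chain_tree :: "nat set \<Rightarrow> tree" where
  "chain_tree B = (B, \<lambda>x. if x \<in> B \<and> x \<noteq> Min B then Max {y \<in> B. y < x} else 0)"

text \<open>Maxima of the blocks, in increasing order: mu P 1 < ... < mu P k, k = card P.\<close>
definition mu :: "nat set set \<Rightarrow> nat \<Rightarrow> nat" where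
  "mu P i = sorted_list_of_set (Max ` P) ! (i - 1)"

definition blk :: "nat set set \<Rightarrow> nat \<Rightarrow> nat set" where
  "blk P i = (THE B. B \<in> P \<and> Max B = mu P i)"

definition block_of :: "nat set set \<Rightarrow> nat \<Rightarrow> nat set" where
  "block_of P x = (THE B. B \<in> P \<and> x \<in> B)"

definition pi_increasing :: "nat set set \<Rightarrow> tree \<Rightarrow> bool" where
  "pi_increasing P T \<longleftrightarrow> inc_tree T \<and>
     verts T = \<Union>{B \<in> P. B \<subseteq> verts T} \<and>
     (\<forall>B \<in> P. B \<subseteq> verts T \<longrightarrow> (\<forall>i \<in> B. \<forall>j \<in> B. i < j \<longrightarrow> is_ancestor T i j))"

definition dep_nodes :: "nat set set \<Rightarrow> tree \<Rightarrow> nat set set" where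
  "dep_nodes P T = {B \<in> P. B \<subseteq> verts T}"

definition dep_edges :: "nat set set \<Rightarrow> tree \<Rightarrow> nat \<Rightarrow> (nat set \<times> nat set) set" where
  "dep_edges P T v = {(B, block_of P (comp_root T v (Max B))) | B.
       B \<in> dep_nodes P T \<and> Max B \<notin> ancs T v}"

definition dep_connected :: "nat set set \<Rightarrow> tree \<Rightarrow> nat \<Rightarrow> bool" where
  "dep_connected P T v \<longleftrightarrow>
     (\<forall>B1 \<in> dep_nodes P T. \<forall>B2 \<in> dep_nodes P T.
        (B1, B2) \<in> (dep_edges P T v \<union> (dep_edges P T v)\<inverse>)\<^sup>*)"

definition irreducible_tree :: "nat set set \<Rightarrow> tree \<Rightarrow> bool" where
  "irreducible_tree P T \<longleftrightarrow> dep_connected P T (Max (verts T))"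

abbreviation reducible_tree :: "nat set set \<Rightarrow> tree \<Rightarrow> bool" where
  "reducible_tree P T \<equiv> \<not> irreducible_tree P T"

text \<open>State: the trees tau_1, tau_2, ... (discarded trees are simply left in place and never
  used again), the vertex nu, and a flag recording whether tau_1 has been created by an
  internal splice at some previous stage.\<close>
type_synonym state = "(nat \<Rightarrow> tree) \<times> nat \<times> bool"

definition init_state :: "nat set set \<Rightarrow> state" where
  "init_state P = ((\<lambda>l. chain_tree (blk P l)), 1, False)"

definition stage :: "nat set set \<Rightarrow> (nat \<Rightarrow> nat) \<Rightarrow> state \<Rightarrow> nat \<Rightarrow> state" where
  "stage P c s i =
     (case s of (tau, nu, fl) \<Rightarrow>
       if c i \<in> verts (tau 1) \<or> c i \<in> verts (tau i)
       then (tau(1 := spl (tau i) (mu P i) (tau 1) nu), c i, True)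
       else (let j = (LEAST j. i < j \<and> c i \<in> verts (tau j)) in
             (tau(j := spl (tau i) (mu P i) (tau j) (c i)), nu, fl)))"

definition input_stage :: "nat set set \<Rightarrow> (nat \<Rightarrow> nat) \<Rightarrow> nat \<Rightarrow> state" where
  "input_stage P c i = foldl (stage P c) (init_state P) [2..<i]"

definition psi :: "nat set set \<Rightarrow> (nat \<Rightarrow> nat) \<Rightarrow> tree" where
  "psi P c = (let k = card P; (tau, nu, fl) = input_stage P c k in
              spl (tau k) (mu P k) (tau 1) nu)"

text \<open>The set C(pi) of sequences (c_2, ..., c_{k-1}), represented by functions
  (values outside 2..k-1 are irrelevant).\<close>
definition in_C :: "nat set set \<Rightarrow> (nat \<Rightarrow> nat) \<Rightarrow> bool" where
  "in_C P c \<longleftrightarrow> (\<forall>i. 2 \<le> i \<and> i \<le> card P - 1 \<longrightarrow> 1 \<le> c i \<and> c i \<le> mu P i)"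

end

theory Submission
  imports Defs
begin


lemma tedges_iff: "(y, x) \<in> tedges T \<longleftrightarrow> x \<in> verts T \<and> x \<noteq> Min (verts T) \<and> y = par T x"
  unfolding tedges_def by auto

lemma ancs_rec:
  "ancs T x = (if x \<in> verts T \<and> x \<noteq> Min (verts T) then insert x (ancs T (par T x)) else {x})"
proof -
  have "(a, x) \<in> (tedges T)\<^sup>* \<longleftrightarrow> a = x \<or> (x \<in> verts T \<and> x \<noteq> Min (verts T) \<and> (a, par T x) \<in> (tedges T)\<^sup>*)" for a
    by (auto simp: tedges_iff elim: rtranclE intro: rtrancl_into_rtrancl)
  thus ?thesis unfolding ancs_def by auto
qed

lemma inc_treeD:
  assumes "inc_tree T"
  shows "finite (verts T)" "verts T \<noteq> {}" "0 \<notin> verts T" "par T (Min (verts T)) = 0"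
    "\<And>x. x \<in> verts T \<Longrightarrow> x \<noteq> Min (verts T) \<Longrightarrow> par T x \<in> verts T \<and> par T x < x"
    "\<And>x. x \<notin> verts T \<Longrightarrow> par T x = 0"
  using assms unfolding inc_tree_def by auto

lemma ancs_self: "x \<in> ancs T x"
  unfolding ancs_def by simp

lemma ancs_trans: "a \<in> ancs T b \<Longrightarrow> b \<in> ancs T x \<Longrightarrow> a \<in> ancs T x"
  unfolding ancs_def by auto

lemma ancs_props:
  assumes "inc_tree T" "x \<in> verts T"
  shows "ancs T x \<subseteq> verts T \<and> Min (verts T) \<in> ancs T x \<and> (\<forall>a\<in>ancs T x. a \<le> x)"
  using assms(2)
proof (induction x rule: less_induct)
  case (less x)
  show ?case
  proof (cases "x = Min (verts T)")
    case True
    then show ?thesis using ancs_rec[of T x] less.prems by simp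
  next
    case False
    with inc_treeD(5)[OF assms(1)] less.prems have p: "par T x \<in> verts T" "par T x < x" by auto
    from less.IH[OF p(2) p(1)] p False less.prems show ?thesis
      using ancs_rec[of T x] by auto
  qed
qed

lemma ancs_le: "inc_tree T \<Longrightarrow> a \<in> ancs T x \<Longrightarrow> a \<le> x"
proof (cases "x \<in> verts T")
  case True
  assume "inc_tree T" "a \<in> ancs T x"
  then show ?thesis using ancs_props[of T x] True by blast
next
  case False
  assume "a \<in> ancs T x"
  then show ?thesis using ancs_rec[of T x] False by simp
qed

lemma ancs_sub: "inc_tree T \<Longrightarrow> x \<in> verts T \<Longrightarrow> ancs T x \<subseteq> verts T"
  using ancs_props by blast

lemma ancs_root: "inc_tree T \<Longrightarrow> x \<in> verts T \<Longrightarrow> Min (verts T) \<in> ancs T x"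
  using ancs_props by blast

lemma ancs_finite: "inc_tree T \<Longrightarrow> finite (ancs T x)"
proof (cases "x \<in> verts T")
  case True
  assume "inc_tree T"
  then show ?thesis using ancs_sub[of T x] inc_treeD(1)[of T] True finite_subset by blast
next
  case False
  then show ?thesis using ancs_rec[of T x] by simp
qed

lemma ancs_down:
  assumes "inc_tree T" "a \<in> ancs T x"
  shows "ancs T a = {y \<in> ancs T x. y \<le> a}"
  using assms(2)
proof (induction x rule: less_induct)
  case (less x)
  show ?case
  proof (cases "x \<in> verts T \<and> x \<noteq> Min (verts T)")
    case False
    have "ancs T x = {x}" using ancs_rec[of T x] by (simp only: if_not_P[OF False])
    with less.prems show ?thesis by auto
  next
    case True
    with inc_treeD(5)[OF assms(1)] have p: "par T x \<in> verts T" "par T x < x" by auto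
    have ax: "ancs T x = insert x (ancs T (par T x))" using ancs_rec[of T x] True by simp
    show ?thesis
    proof (cases "a = x")
      case True
      then show ?thesis using ancs_le[OF assms(1)] by auto
    next
      case False
      then have a: "a \<in> ancs T (par T x)" using less.prems ax by auto
      have "ancs T a = {y \<in> ancs T (par T x). y \<le> a}" using less.IH[OF p(2) a] .
      moreover have "a \<le> par T x" using ancs_le[OF assms(1) a] .
      ultimately show ?thesis using ax p(2) by auto
    qed
  qed
qed

lemma ancs_sub_ancs: "inc_tree T \<Longrightarrow> a \<in> ancs T x \<Longrightarrow> ancs T a \<subseteq> ancs T x"
  using ancs_trans by blast

lemma ancs_between:
  "inc_tree T \<Longrightarrow> z \<in> ancs T x \<Longrightarrow> y \<in> ancs T x \<Longrightarrow> z \<le> y \<Longrightarrow> z \<in> ancs T y"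
  using ancs_down[of T y x] by auto

lemma ancs_chain:
  assumes "inc_tree T" "S \<subseteq> verts T" "Min (verts T) \<in> S"
    "\<And>x. x \<in> S \<Longrightarrow> x \<noteq> Min (verts T) \<Longrightarrow> par T x = Max {y \<in> S. y < x}"
    "x \<in> S"
  shows "ancs T x = {y \<in> S. y \<le> x}"
  using assms(5)
proof (induction x rule: less_induct)
  case (less x)
  have fS: "finite S" using assms(2) inc_treeD(1)[OF assms(1)] finite_subset by blast
  have mn: "\<And>y. y \<in> S \<Longrightarrow> Min (verts T) \<le> y"
    using assms(2) inc_treeD(1)[OF assms(1)] by auto
  show ?case
  proof (cases "x = Min (verts T)")
    case True
    then show ?thesis using ancs_rec[of T x] mn less.prems by (auto intro: antisym)
  next
    case False
    have ne: "{y \<in> S. y < x} \<noteq> {}" using assms(3) mn[OF less.prems] False by force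
    have fin: "finite {y \<in> S. y < x}" using fS by simp
    define p where "p = Max {y \<in> S. y < x}"
    have pS: "p \<in> S" "p < x" using Max_in[OF fin ne] unfolding p_def by auto
    have pmax: "\<And>y. y \<in> S \<Longrightarrow> y < x \<Longrightarrow> y \<le> p" unfolding p_def using fin by auto
    have "ancs T x = insert x (ancs T p)"
      using ancs_rec[of T x] False less.prems assms(2,4) unfolding p_def by auto
    also have "\<dots> = insert x {y \<in> S. y \<le> p}" using less.IH[OF pS(2) pS(1)] by simp
    also have "\<dots> = {y \<in> S. y \<le> x}" using pS pmax less.prems by force
    finally show ?thesis .
  qed
qed

lemma comp_root_props:
  assumes "inc_tree T" "x \<in> verts T" "v \<in> verts T"
  shows "comp_root T v x \<in> ancs T x" "comp_root T v x \<in> ancs T v"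
    "\<And>z. z \<in> ancs T x \<Longrightarrow> z \<in> ancs T v \<Longrightarrow> z \<le> comp_root T v x"
proof -
  have f: "finite (ancs T x \<inter> ancs T v)" using ancs_finite[OF assms(1)] by blast
  have ne: "ancs T x \<inter> ancs T v \<noteq> {}" using ancs_root[OF assms(1)] assms(2,3) by blast
  show "comp_root T v x \<in> ancs T x" "comp_root T v x \<in> ancs T v"
    using Max_in[OF f ne] unfolding comp_root_def by auto
  show "\<And>z. z \<in> ancs T x \<Longrightarrow> z \<in> ancs T v \<Longrightarrow> z \<le> comp_root T v x"
    using f unfolding comp_root_def by auto
qed

lemma comp_root_self:
  assumes "inc_tree T" "x \<in> ancs T v"
  shows "comp_root T v x = x"
proof -
  have "ancs T x \<inter> ancs T v = ancs T x" using ancs_trans[OF _ assms(2)] by blast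
  moreover have "Max (ancs T x) = x"
    using ancs_finite[OF assms(1)] ancs_self[of x T] ancs_le[OF assms(1)]
    by (intro Max_eqI) auto
  ultimately show ?thesis unfolding comp_root_def by simp
qed



locale splice =
  fixes T1 v1 T2 v2
  assumes t1: "inc_tree T1" and t2: "inc_tree T2"
    and disj: "verts T1 \<inter> verts T2 = {}"
    and v1: "v1 \<in> verts T1" and v2: "v2 \<in> verts T2"
begin

definition "C = ancs T1 v1 \<union> ancs T2 v2"
abbreviation "T \<equiv> spl T1 v1 T2 v2"

lemma swap: "splice T2 v2 T1 v1"
  using t1 t2 disj v1 v2 by unfold_locales auto

lemma spl_swap: "spl T1 v1 T2 v2 = spl T2 v2 T1 v1"
proof -
  have "ancs T1 v1 \<union> ancs T2 v2 = ancs T2 v2 \<union> ancs T1 v1" by blast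
  then show ?thesis unfolding spl_def Let_def using disj
    by (auto simp: fun_eq_iff Un_commute)
qed

lemma verts_T: "verts T = verts T1 \<union> verts T2"
  unfolding spl_def verts_def Let_def by simp

lemma par_T: "par T x = (if x \<in> C then (if x = Min C then 0 else Max {y \<in> C. y < x})
           else if x \<in> verts T1 then par T1 x
           else if x \<in> verts T2 then par T2 x else 0)"
  unfolding spl_def par_def Let_def C_def by simp

lemma C_sub: "C \<subseteq> verts T1 \<union> verts T2"
  unfolding C_def using ancs_sub[OF t1 v1] ancs_sub[OF t2 v2] by blast

lemma C_V1: "C \<inter> verts T1 = ancs T1 v1"
  unfolding C_def using ancs_sub[OF t1 v1] ancs_sub[OF t2 v2] disj by blast

lemma C_V2: "C \<inter> verts T2 = ancs T2 v2"
  unfolding C_def using ancs_sub[OF t1 v1] ancs_sub[OF t2 v2] disj by blast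

lemma finV: "finite (verts T1 \<union> verts T2)"
  using inc_treeD(1)[OF t1] inc_treeD(1)[OF t2] by simp

lemma finC: "finite C" using C_sub finV finite_subset by blast

lemma MinV_C: "Min (verts T1 \<union> verts T2) \<in> C"
proof -
  let ?m = "Min (verts T1 \<union> verts T2)"
  have m: "?m \<in> verts T1 \<union> verts T2" using finV inc_treeD(2)[OF t1] by (intro Min_in) auto
  show ?thesis
  proof (cases "?m \<in> verts T1")
    case True
    then have "?m = Min (verts T1)"
    proof (intro antisym)
      show "?m \<le> Min (verts T1)" using finV inc_treeD(1,2)[OF t1] by (intro Min_le) auto
      show "Min (verts T1) \<le> ?m" using inc_treeD(1,2)[OF t1] \<open>?m \<in> verts T1\<close> by (intro Min_le) auto
    qed
    then show ?thesis using ancs_root[OF t1 v1] unfolding C_def by simp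
  next
    case False
    then have m2: "?m \<in> verts T2" using m by simp
    then have "?m = Min (verts T2)"
    proof (intro antisym)
      show "?m \<le> Min (verts T2)" using finV inc_treeD(1,2)[OF t2] by (intro Min_le) auto
      show "Min (verts T2) \<le> ?m" using inc_treeD(1,2)[OF t2] \<open>?m \<in> verts T2\<close> by (intro Min_le) auto
    qed
    then show ?thesis using ancs_root[OF t2 v2] unfolding C_def by simp
  qed
qed

lemma MinC: "Min C = Min (verts T1 \<union> verts T2)"
  using MinV_C C_sub finC finV by (intro antisym) (auto intro: Min_le Min_antimono)

lemma inc_T: "inc_tree T"
proof -
  have nz: "0 \<notin> verts T1 \<union> verts T2" using inc_treeD(3)[OF t1] inc_treeD(3)[OF t2] by simp
  have ne: "verts T1 \<union> verts T2 \<noteq> {}" using v1 by auto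
  have r: "par T (Min (verts T)) = 0" unfolding verts_T par_T using MinV_C MinC by simp
  have s: "par T x \<in> verts T \<and> par T x < x" if x: "x \<in> verts T" "x \<noteq> Min (verts T)" for x
  proof (cases "x \<in> C")
    case True
    then have "x \<noteq> Min C" using x MinC verts_T by simp
    then have ne: "{y \<in> C. y < x} \<noteq> {}" using True Min_le[OF finC] MinV_C MinC
      by (metis (mono_tags, lifting) empty_iff le_neq_implies_less mem_Collect_eq)
    have "Max {y \<in> C. y < x} \<in> {y \<in> C. y < x}" using finC ne by (intro Max_in) auto
    then show ?thesis using True \<open>x \<noteq> Min C\<close> C_sub unfolding par_T verts_T by auto
  next
    case False
    have "Min (verts T1) \<in> C" "Min (verts T2) \<in> C" unfolding C_def
      using ancs_root[OF t1 v1] ancs_root[OF t2 v2] by auto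
    then show ?thesis using False x inc_treeD(5)[OF t1, of x] inc_treeD(5)[OF t2, of x]
      unfolding par_T verts_T by auto
  qed
  have o: "par T x = 0" if "x \<notin> verts T" for x
    using that C_sub unfolding par_T verts_T by auto
  show ?thesis unfolding inc_tree_def using finV nz ne r s o verts_T by auto
qed

lemma ancs_C: "y \<in> C \<Longrightarrow> ancs T y = {z \<in> C. z \<le> y}"
  by (rule ancs_chain[OF inc_T]) (use C_sub MinV_C MinC in \<open>auto simp: verts_T par_T\<close>)

lemma ancs_T1: "x \<in> verts T1 \<Longrightarrow> ancs T x = ancs T1 x \<union> {z \<in> C. z \<le> comp_root T1 v1 x}"
proof (induction x rule: less_induct)
  case (less x)
  show ?case
  proof (cases "x \<in> C")
    case True
    then have xa: "x \<in> ancs T1 v1" using C_V1 less.prems by blast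
    have "ancs T1 x = {y \<in> ancs T1 v1. y \<le> x}" using ancs_down[OF t1 xa] .
    then show ?thesis using ancs_C[OF True] comp_root_self[OF t1 xa] C_def by auto
  next
    case False
    have r1: "Min (verts T1) \<in> C" unfolding C_def using ancs_root[OF t1 v1] by auto
    then have xr: "x \<noteq> Min (verts T1)" using False by auto
    have p: "par T1 x \<in> verts T1" "par T1 x < x" using inc_treeD(5)[OF t1 less.prems xr] by auto
    have xr': "x \<noteq> Min (verts T)" using False MinV_C verts_T by auto
    have pT: "par T x = par T1 x" using False less.prems unfolding par_T by simp
    have aT: "ancs T x = insert x (ancs T (par T1 x))"
      using ancs_rec[of T x] xr' less.prems verts_T pT by simp
    have a1: "ancs T1 x = insert x (ancs T1 (par T1 x))"
      using ancs_rec[of T1 x] xr less.prems by simp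
    have xnot: "x \<notin> ancs T1 v1" using False C_def by auto
    have "ancs T1 x \<inter> ancs T1 v1 = ancs T1 (par T1 x) \<inter> ancs T1 v1" using a1 xnot by auto
    then have cr: "comp_root T1 v1 x = comp_root T1 v1 (par T1 x)" unfolding comp_root_def by simp
    show ?thesis using aT a1 cr less.IH[OF p(2) p(1)] by auto
  qed
qed

lemma ancs_T2: "x \<in> verts T2 \<Longrightarrow> ancs T x = ancs T2 x \<union> {z \<in> C. z \<le> comp_root T2 v2 x}"
proof -
  assume x: "x \<in> verts T2"
  have "C = splice.C T2 v2 T1 v1" unfolding C_def splice.C_def[OF swap] by blast
  then show ?thesis using splice.ancs_T1[OF swap x] spl_swap by simp
qed

end



lemma rtrancl_sym_inv:
  assumes "(a, b) \<in> (E \<union> E\<inverse>)\<^sup>*" "\<And>x y. (x, y) \<in> E \<Longrightarrow> Q x = Q y"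
  shows "Q a = Q b"
  using assms(1) by (induction rule: rtrancl_induct) (auto dest: assms(2))

lemma R_sym: "(a, b) \<in> (E \<union> E\<inverse>)\<^sup>* \<Longrightarrow> (b, a) \<in> (E \<union> E\<inverse>)\<^sup>*"
proof -
  assume "(a, b) \<in> (E \<union> E\<inverse>)\<^sup>*"
  then have "(b, a) \<in> ((E \<union> E\<inverse>)\<inverse>)\<^sup>*" by (simp add: rtrancl_converse)
  moreover have "(E \<union> E\<inverse>)\<inverse> = E \<union> E\<inverse>" by (auto simp: converse_Un)
  ultimately show ?thesis by simp
qed

lemma R_edge: "(a, b) \<in> E \<Longrightarrow> (a, b) \<in> (E \<union> E\<inverse>)\<^sup>*" by auto

lemma dep_edges_iff: "(B, B') \<in> dep_edges P T v \<longleftrightarrow>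
   B \<in> dep_nodes P T \<and> Max B \<notin> ancs T v \<and> B' = block_of P (comp_root T v (Max B))"
  unfolding dep_edges_def by auto

locale part =
  fixes r :: nat and P :: "nat set set"
  assumes part: "partition_on {1..r} P"
begin

lemma blockD: "B \<in> P \<Longrightarrow> finite B \<and> B \<noteq> {} \<and> B \<subseteq> {1..r}"
  using partition_onD1[OF part] partition_onD3[OF part] finite_subset
  by (metis Sup_upper finite_atLeastAtMost)

lemma block_disj: "B \<in> P \<Longrightarrow> B' \<in> P \<Longrightarrow> B \<noteq> B' \<Longrightarrow> B \<inter> B' = {}"
  using partition_onD2[OF part] by (auto simp: disjoint_def)

lemma block_of_eq: "x \<in> B \<Longrightarrow> B \<in> P \<Longrightarrow> block_of P x = B"
  unfolding block_of_def using block_disj by (intro the_equality) blast+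

lemma Max_block: "B \<in> P \<Longrightarrow> Max B \<in> B"
  using blockD by (intro Max_in) auto

lemma block_of_Max: "B \<in> P \<Longrightarrow> block_of P (Max B) = B"
  using Max_block block_of_eq by blast

lemma pi_block:
  assumes "pi_increasing P T" "x \<in> verts T"
  shows "block_of P x \<in> P" "x \<in> block_of P x" "block_of P x \<subseteq> verts T"
proof -
  obtain B where B: "B \<in> P" "B \<subseteq> verts T" "x \<in> B"
    using assms unfolding pi_increasing_def by blast
  then show "block_of P x \<in> P" "x \<in> block_of P x" "block_of P x \<subseteq> verts T"
    using block_of_eq by auto
qed

lemma pi_inc: "pi_increasing P T \<Longrightarrow> inc_tree T" unfolding pi_increasing_def by simp

lemma pi_anc: "pi_increasing P T \<Longrightarrow> B \<in> P \<Longrightarrow> B \<subseteq> verts T \<Longrightarrow> i \<in> B \<Longrightarrow> j \<in> B \<Longrightarrow> i \<le> j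
   \<Longrightarrow> i \<in> ancs T j"
  unfolding pi_increasing_def is_ancestor_def using ancs_self
  by (metis le_neq_implies_less)

lemma node_exists: "pi_increasing P T \<Longrightarrow> \<exists>B. B \<in> dep_nodes P T"
  using pi_block[of T] inc_treeD(2)[OF pi_inc] unfolding dep_nodes_def by blast

end

locale psplice = splice + part +
  assumes p1: "pi_increasing P T1" and p2: "pi_increasing P T2"
begin

lemma side: "B \<in> P \<Longrightarrow> B \<subseteq> verts T1 \<union> verts T2 \<Longrightarrow> B \<subseteq> verts T1 \<or> B \<subseteq> verts T2"
proof -
  assume B: "B \<in> P" "B \<subseteq> verts T1 \<union> verts T2"
  obtain x where x: "x \<in> B" using blockD[OF B(1)] by blast
  show ?thesis
  proof (cases "x \<in> verts T1")
    case True
    then show ?thesis using pi_block[OF p1 True] block_of_eq[OF x B(1)] by simp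
  next
    case False
    then have "x \<in> verts T2" using x B by auto
    then show ?thesis using pi_block[OF p2 \<open>x \<in> verts T2\<close>] block_of_eq[OF x B(1)] by blast
  qed
qed

lemma not_both: "B \<in> P \<Longrightarrow> B \<subseteq> verts T2 \<Longrightarrow> \<not> B \<subseteq> verts T1"
  using blockD disj by blast

lemma pi_T: "pi_increasing P T"
proof -
  have V: "verts T = \<Union>{B \<in> P. B \<subseteq> verts T}"
  proof
    show "verts T \<subseteq> \<Union>{B \<in> P. B \<subseteq> verts T}"
    proof
      fix x assume "x \<in> verts T"
      then have "x \<in> verts T1 \<or> x \<in> verts T2" using verts_T by auto
      then show "x \<in> \<Union>{B \<in> P. B \<subseteq> verts T}"
        using pi_block[OF p1, of x] pi_block[OF p2, of x] verts_T by blast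
    qed
  qed auto
  have A: "is_ancestor T i j" if B: "B \<in> P" "B \<subseteq> verts T" "i \<in> B" "j \<in> B" "i < j" for B i j
  proof -
    have "B \<subseteq> verts T1 \<or> B \<subseteq> verts T2" using side B verts_T by simp
    then show ?thesis
    proof
      assume "B \<subseteq> verts T1"
      then have "i \<in> ancs T1 j" "j \<in> verts T1" using pi_anc[OF p1 B(1) _ B(3,4)] B by auto
      then show ?thesis unfolding is_ancestor_def using ancs_T1 verts_T by auto
    next
      assume "B \<subseteq> verts T2"
      then have "i \<in> ancs T2 j" "j \<in> verts T2" using pi_anc[OF p2 B(1) _ B(3,4)] B by auto
      then show ?thesis unfolding is_ancestor_def using ancs_T2 verts_T by auto
    qed
  qed
  show ?thesis unfolding pi_increasing_def using inc_T V A by blast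
qed

lemma reducible:
  assumes mx: "v1 = Max (verts T1 \<union> verts T2)"
  shows "\<not> irreducible_tree P T"
proof
  assume irr: "irreducible_tree P T"
  have MT: "Max (verts T) = v1" using mx verts_T by simp
  have Cle: "z \<le> v1" if "z \<in> C" for z using that C_sub finV mx by auto
  have AC: "ancs T v1 = C"
    using ancs_T1[OF v1] comp_root_self[OF t1 ancs_self] Cle C_def by auto
  have cr1: "comp_root T v1 x \<in> verts T1" if x: "x \<in> verts T1" for x
  proof -
    let ?e = "comp_root T1 v1 x"
    have e: "?e \<in> ancs T1 x" "?e \<in> ancs T1 v1" using comp_root_props[OF t1 x v1] by auto
    have "Max ((ancs T1 x \<union> {z \<in> C. z \<le> ?e}) \<inter> C) = ?e"
    proof (rule Max_eqI)
      show "finite ((ancs T1 x \<union> {z \<in> C. z \<le> ?e}) \<inter> C)" using finC by blast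
      show "?e \<in> (ancs T1 x \<union> {z \<in> C. z \<le> ?e}) \<inter> C" using e C_def by auto
      fix z assume z: "z \<in> (ancs T1 x \<union> {z \<in> C. z \<le> ?e}) \<inter> C"
      show "z \<le> ?e"
      proof (cases "z \<in> ancs T1 x")
        case True
        then have "z \<in> ancs T1 v1" using z C_V1 ancs_sub[OF t1 x] by blast
        then show ?thesis using comp_root_props(3)[OF t1 x v1] True by blast
      qed (use z in auto)
    qed
    then have "comp_root T v1 x = ?e" by (simp add: comp_root_def[of T] AC ancs_T1[OF x])
    then show ?thesis using e ancs_sub[OF t1 v1] by auto
  qed
  have cr2: "comp_root T v1 x \<in> verts T2" if x: "x \<in> verts T2" for x
  proof -
    let ?e = "comp_root T2 v2 x"
    have e: "?e \<in> ancs T2 x" "?e \<in> ancs T2 v2" using comp_root_props[OF t2 x v2] by auto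
    have "Max ((ancs T2 x \<union> {z \<in> C. z \<le> ?e}) \<inter> C) = ?e"
    proof (rule Max_eqI)
      show "finite ((ancs T2 x \<union> {z \<in> C. z \<le> ?e}) \<inter> C)" using finC by blast
      show "?e \<in> (ancs T2 x \<union> {z \<in> C. z \<le> ?e}) \<inter> C" using e C_def by auto
      fix z assume z: "z \<in> (ancs T2 x \<union> {z \<in> C. z \<le> ?e}) \<inter> C"
      show "z \<le> ?e"
      proof (cases "z \<in> ancs T2 x")
        case True
        then have "z \<in> ancs T2 v2" using z C_V2 ancs_sub[OF t2 x] by blast
        then show ?thesis using comp_root_props(3)[OF t2 x v2] True by blast
      qed (use z in auto)
    qed
    then have "comp_root T v1 x = ?e" by (simp add: comp_root_def[of T] AC ancs_T2[OF x])
    then show ?thesis using e ancs_sub[OF t2 v2] by auto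
  qed
  have inv: "(B \<subseteq> verts T1) = (B' \<subseteq> verts T1)" if "(B, B') \<in> dep_edges P T v1" for B B'
  proof -
    from that have B: "B \<in> P" "B \<subseteq> verts T" and B': "B' = block_of P (comp_root T v1 (Max B))"
      unfolding dep_edges_iff dep_nodes_def by auto
    have "B \<subseteq> verts T1 \<or> B \<subseteq> verts T2" using side B verts_T by simp
    then show ?thesis
    proof
      assume b1: "B \<subseteq> verts T1"
      then have "comp_root T v1 (Max B) \<in> verts T1" using cr1 Max_block[OF B(1)] by auto
      then show ?thesis using pi_block[OF p1] B' b1 by auto
    next
      assume b2: "B \<subseteq> verts T2"
      then have c: "comp_root T v1 (Max B) \<in> verts T2" using cr2 Max_block[OF B(1)] by auto
      then show ?thesis using pi_block[OF p2 c] B' not_both[OF B(1) b2] not_both by auto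
    qed
  qed
  have n1: "block_of P v1 \<in> dep_nodes P T" "block_of P v1 \<subseteq> verts T1"
    using pi_block[OF p1 v1] verts_T unfolding dep_nodes_def by auto
  have n2: "block_of P v2 \<in> dep_nodes P T" "\<not> block_of P v2 \<subseteq> verts T1"
    using pi_block[OF p2 v2] verts_T not_both unfolding dep_nodes_def by auto
  from irr n1 n2 have "(block_of P v1, block_of P v2) \<in> (dep_edges P T v1 \<union> (dep_edges P T v1)\<inverse>)\<^sup>*"
    unfolding irreducible_tree_def dep_connected_def MT by blast
  from rtrancl_sym_inv[where Q="\<lambda>B. B \<subseteq> verts T1", OF this] inv n1 n2 show False by blast
qed

end



lemma R_join: "(a, D) \<in> (E \<union> E\<inverse>)\<^sup>* \<Longrightarrow> (b, D) \<in> (E \<union> E\<inverse>)\<^sup>* \<Longrightarrow> (a, b) \<in> (E \<union> E\<inverse>)\<^sup>*"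
  using R_sym rtrancl_trans by metis

context psplice begin

lemma irreducible:
  assumes irr1: "irreducible_tree P T1" and irr2: "irreducible_tree P T2"
    and m1: "v1 = Max (verts T1)" and lt: "v1 < Max (verts T2)" and vlt: "v2 < v1"
  shows "irreducible_tree P T"
proof -
  define M2 where "M2 = Max (verts T2)"
  have f1: "finite (verts T1)" and f2: "finite (verts T2)" using inc_treeD(1) t1 t2 by auto
  have M2V: "M2 \<in> verts T2" unfolding M2_def using f2 v2 by (intro Max_in) auto
  have le1: "x \<le> v1" if "x \<in> verts T1" for x using m1 f1 that by auto
  have MT: "Max (verts T) = M2" unfolding verts_T
  proof (rule Max_eqI)
    show "finite (verts T1 \<union> verts T2)" using f1 f2 by simp
    show "M2 \<in> verts T1 \<union> verts T2" using M2V by simp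
    fix y assume "y \<in> verts T1 \<union> verts T2"
    then show "y \<le> M2" using le1 lt f2 unfolding M2_def by fastforce
  qed
  define d where "d = comp_root T2 v2 M2"
  have d: "d \<in> ancs T2 v2" "d \<in> ancs T2 M2" using comp_root_props[OF t2 M2V v2] d_def by auto
  have dlt: "d < v1" using ancs_le[OF t2 d(1)] vlt by simp
  have dC: "d \<in> C" using d C_def by auto
  have dV: "d \<in> verts T2" using d ancs_sub[OF t2 v2] by auto
  have AM: "ancs T M2 = ancs T2 M2 \<union> {z \<in> C. z \<le> d}" using ancs_T2[OF M2V] d_def by simp
  have AMV1: "x \<in> ancs T M2 \<longleftrightarrow> x \<in> ancs T1 v1 \<and> x \<le> d" if x: "x \<in> verts T1" for x
    using AM ancs_sub[OF t2 M2V] disj x C_V1 C_def by blast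
  have AMV2: "x \<in> ancs T M2 \<longleftrightarrow> x \<in> ancs T2 M2" if x: "x \<in> verts T2" for x
  proof
    assume "x \<in> ancs T M2"
    then consider "x \<in> ancs T2 M2" | "x \<in> C" "x \<le> d" using AM by auto
    then show "x \<in> ancs T2 M2"
    proof cases
      case 2
      then have "x \<in> ancs T2 v2" using C_V2 x by blast
      then have "x \<in> ancs T2 d" using ancs_between[OF t2 _ d(1) 2(2)] by blast
      then show ?thesis using ancs_trans d(2) by blast
    qed
  qed (use AM in auto)
  have cr1: "comp_root T M2 x = min (comp_root T1 v1 x) d" if x: "x \<in> verts T1" for x
  proof -
    let ?e = "comp_root T1 v1 x"
    have e: "?e \<in> ancs T1 x" "?e \<in> ancs T1 v1" using comp_root_props[OF t1 x v1] by auto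
    have "Max ((ancs T1 x \<union> {z \<in> C. z \<le> ?e}) \<inter> (ancs T2 M2 \<union> {z \<in> C. z \<le> d})) = min ?e d"
    proof (rule Max_eqI)
      show "finite ((ancs T1 x \<union> {z \<in> C. z \<le> ?e}) \<inter> (ancs T2 M2 \<union> {z \<in> C. z \<le> d}))"
        using ancs_finite[OF t1] finC by auto
      show "min ?e d \<in> (ancs T1 x \<union> {z \<in> C. z \<le> ?e}) \<inter> (ancs T2 M2 \<union> {z \<in> C. z \<le> d})"
        using e dC C_def by (auto simp: min_def)
      fix z assume z: "z \<in> (ancs T1 x \<union> {z \<in> C. z \<le> ?e}) \<inter> (ancs T2 M2 \<union> {z \<in> C. z \<le> d})"
      show "z \<le> min ?e d"
      proof (cases "z \<in> ancs T1 x")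
        case True
        then have zV: "z \<in> verts T1" using ancs_sub[OF t1 x] by blast
        then have "z \<notin> ancs T2 M2" using ancs_sub[OF t2 M2V] disj by blast
        then have zc: "z \<in> C" "z \<le> d" using z by auto
        then have "z \<in> ancs T1 v1" using C_V1 zV by blast
        then show ?thesis using comp_root_props(3)[OF t1 x v1] True zc by simp
      next
        case False
        then have zc: "z \<in> C" "z \<le> ?e" using z by auto
        show ?thesis
        proof (cases "z \<in> ancs T2 M2")
          case True
          then have "z \<in> ancs T2 v2" using C_V2 zc ancs_sub[OF t2 M2V] by blast
          then have "z \<le> d" using comp_root_props(3)[OF t2 M2V v2] True d_def by simp
          then show ?thesis using zc by simp
        qed (use z zc in auto)
      qed
    qed
    then show ?thesis by (simp add: comp_root_def[of T] ancs_T1[OF x] AM)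
  qed
  have cr2: "comp_root T M2 x = comp_root T2 M2 x" if x: "x \<in> verts T2" for x
  proof -
    let ?f = "comp_root T2 M2 x"
    let ?e = "comp_root T2 v2 x"
    have f: "?f \<in> ancs T2 x" "?f \<in> ancs T2 M2" using comp_root_props[OF t2 x M2V] by auto
    have e: "?e \<in> ancs T2 x" "?e \<in> ancs T2 v2" using comp_root_props[OF t2 x v2] by auto
    have h1: "z \<in> ancs T2 x" if "z \<in> C" "z \<in> verts T2" "z \<le> ?e" for z
    proof -
      have "z \<in> ancs T2 v2" using that C_V2 by blast
      then have "z \<in> ancs T2 ?e" using ancs_between[OF t2 _ e(2) that(3)] by blast
      then show ?thesis using ancs_trans e(1) by blast
    qed
    have h2: "z \<in> ancs T2 M2" if "z \<in> C" "z \<in> verts T2" "z \<le> d" for z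
    proof -
      have "z \<in> ancs T2 v2" using that C_V2 by blast
      then have "z \<in> ancs T2 d" using ancs_between[OF t2 _ d(1) that(3)] by blast
      then show ?thesis using ancs_trans d(2) by blast
    qed
    have w: "min ?e d \<le> ?f"
    proof -
      have "min ?e d \<in> C" "min ?e d \<in> verts T2" using e dC dV C_def ancs_sub[OF t2 v2]
        by (auto simp: min_def)
      then have "min ?e d \<in> ancs T2 x" "min ?e d \<in> ancs T2 M2" using h1 h2 by auto
      then show ?thesis using comp_root_props(3)[OF t2 x M2V] by blast
    qed
    have "Max ((ancs T2 x \<union> {z \<in> C. z \<le> ?e}) \<inter> (ancs T2 M2 \<union> {z \<in> C. z \<le> d})) = ?f"
    proof (rule Max_eqI)
      show "finite ((ancs T2 x \<union> {z \<in> C. z \<le> ?e}) \<inter> (ancs T2 M2 \<union> {z \<in> C. z \<le> d}))"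
        using ancs_finite[OF t2] finC by auto
      show "?f \<in> (ancs T2 x \<union> {z \<in> C. z \<le> ?e}) \<inter> (ancs T2 M2 \<union> {z \<in> C. z \<le> d})"
        using f by auto
      fix z assume z: "z \<in> (ancs T2 x \<union> {z \<in> C. z \<le> ?e}) \<inter> (ancs T2 M2 \<union> {z \<in> C. z \<le> d})"
      show "z \<le> ?f"
      proof (cases "z \<in> verts T2")
        case True
        then have "z \<in> ancs T2 x" "z \<in> ancs T2 M2" using z h1 h2 by auto
        then show ?thesis using comp_root_props(3)[OF t2 x M2V] by blast
      next
        case False
        then have "z \<notin> ancs T2 x" "z \<notin> ancs T2 M2" using ancs_sub[OF t2 x] ancs_sub[OF t2 M2V] by auto
        then have "z \<le> min ?e d" using z by auto
        then show ?thesis using w by linarith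
      qed
    qed
    then show ?thesis by (simp add: comp_root_def[of T] ancs_T2[OF x] AM)
  qed
  define E where "E = dep_edges P T M2"
  define D where "D = block_of P d"
  have DP: "D \<in> P" "D \<subseteq> verts T2" using pi_block[OF p2 dV] D_def by auto
  have D2: "D \<in> dep_nodes P T2" using DP unfolding dep_nodes_def by auto
  have nodesT: "dep_nodes P T1 \<subseteq> dep_nodes P T" "dep_nodes P T2 \<subseteq> dep_nodes P T"
    unfolding dep_nodes_def verts_T by auto
  have E2: "dep_edges P T2 M2 \<subseteq> E"
  proof
    fix p assume "p \<in> dep_edges P T2 M2"
    then obtain B B' where p: "p = (B, B')" and BB: "(B, B') \<in> dep_edges P T2 M2" by (cases p) auto
    then have B: "B \<in> dep_nodes P T2" "Max B \<notin> ancs T2 M2"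
      "B' = block_of P (comp_root T2 M2 (Max B))" unfolding dep_edges_iff by auto
    have MB: "Max B \<in> verts T2" using B(1) Max_block unfolding dep_nodes_def by auto
    show "p \<in> E" unfolding E_def p dep_edges_iff
      using B nodesT AMV2[OF MB] cr2[OF MB] by auto
  qed
  have A: "(B, D) \<in> (E \<union> E\<inverse>)\<^sup>*" if B: "B \<in> dep_nodes P T2" for B
  proof -
    have "(D, B) \<in> (dep_edges P T2 M2 \<union> (dep_edges P T2 M2)\<inverse>)\<^sup>*"
      using irr2 D2 B unfolding irreducible_tree_def dep_connected_def M2_def by blast
    moreover have "dep_edges P T2 M2 \<union> (dep_edges P T2 M2)\<inverse> \<subseteq> E \<union> E\<inverse>" using E2 by auto
    ultimately have "(D, B) \<in> (E \<union> E\<inverse>)\<^sup>*" using rtrancl_mono by blast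
    then show ?thesis by (rule R_sym)
  qed
  have edge1: "(B, D) \<in> E" if B: "B \<in> dep_nodes P T1" "d < comp_root T1 v1 (Max B)" for B
  proof -
    have MB: "Max B \<in> verts T1" using B(1) Max_block unfolding dep_nodes_def by auto
    have "Max B \<notin> ancs T M2"
    proof
      assume "Max B \<in> ancs T M2"
      then have "Max B \<in> ancs T1 v1" "Max B \<le> d" using AMV1[OF MB] by auto
      then show False using comp_root_self[OF t1] B(2) by simp
    qed
    then show ?thesis unfolding E_def dep_edges_iff D_def using B(1) nodesT cr1[OF MB] B(2) by auto
  qed
  have inv: "((B, D) \<in> (E \<union> E\<inverse>)\<^sup>*) = ((B', D) \<in> (E \<union> E\<inverse>)\<^sup>*)"
    if BB: "(B, B') \<in> dep_edges P T1 v1" for B B'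
  proof -
    from BB have B: "B \<in> dep_nodes P T1" "Max B \<notin> ancs T1 v1"
      "B' = block_of P (comp_root T1 v1 (Max B))" unfolding dep_edges_iff by auto
    have BP: "B \<in> P" "B \<subseteq> verts T1" using B(1) unfolding dep_nodes_def by auto
    have MB: "Max B \<in> verts T1" using BP Max_block by auto
    let ?e = "comp_root T1 v1 (Max B)"
    have e: "?e \<in> ancs T1 v1" "?e \<in> verts T1" using comp_root_props[OF t1 MB v1] ancs_sub[OF t1 v1] by auto
    show ?thesis
    proof (cases "?e \<le> d")
      case True
      have "Max B \<notin> ancs T M2" using AMV1[OF MB] B(2) by auto
      then have "(B, B') \<in> E" unfolding E_def dep_edges_iff using B nodesT cr1[OF MB] True
        by (auto simp: min_def)
      then have r1: "(B, B') \<in> (E \<union> E\<inverse>)\<^sup>*" by (rule R_edge)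
      then have r2: "(B', B) \<in> (E \<union> E\<inverse>)\<^sup>*" by (rule R_sym)
      show ?thesis using rtrancl_trans[OF r1] rtrancl_trans[OF r2] by blast
    next
      case False
      have bB: "B' \<in> P" "?e \<in> B'" "B' \<subseteq> verts T1" using pi_block[OF p1 e(2)] B(3) by auto
      have fB': "finite B'" using blockD[OF bB(1)] by simp
      have "?e \<le> Max B'" using fB' bB(2) by simp
      then have "?e \<in> ancs T1 (Max B')" using pi_anc[OF p1 bB(1) bB(3) bB(2) Max_block[OF bB(1)]] by blast
      then have "?e \<le> comp_root T1 v1 (Max B')"
        using comp_root_props(3)[OF t1 _ v1] e(1) Max_block[OF bB(1)] bB(3) by blast
      then have "(B', D) \<in> E" using edge1[of B'] bB False unfolding dep_nodes_def by auto
      moreover have "(B, D) \<in> E" using edge1[OF B(1)] False by simp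
      ultimately show ?thesis using R_edge by blast
    qed
  qed
  define B0 where "B0 = block_of P v1"
  have B0: "B0 \<in> P" "v1 \<in> B0" "B0 \<subseteq> verts T1" using pi_block[OF p1 v1] B0_def by auto
  have MB0: "Max B0 = v1" using B0 le1 blockD[OF B0(1)] by (intro Max_eqI) auto
  have B0n: "B0 \<in> dep_nodes P T1" using B0 unfolding dep_nodes_def by auto
  have QB0: "(B0, D) \<in> (E \<union> E\<inverse>)\<^sup>*"
    using edge1[OF B0n] MB0 comp_root_self[OF t1 ancs_self] dlt R_edge by simp
  have B1: "(B, D) \<in> (E \<union> E\<inverse>)\<^sup>*" if B: "B \<in> dep_nodes P T1" for B
  proof -
    have "(B0, B) \<in> (dep_edges P T1 v1 \<union> (dep_edges P T1 v1)\<inverse>)\<^sup>*"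
      using irr1 B0n B unfolding irreducible_tree_def dep_connected_def m1[symmetric] by blast
    from rtrancl_sym_inv[where Q="\<lambda>B. (B, D) \<in> (E \<union> E\<inverse>)\<^sup>*", OF this] inv QB0 show ?thesis by blast
  qed
  have all: "(B, D) \<in> (E \<union> E\<inverse>)\<^sup>*" if B: "B \<in> dep_nodes P T" for B
  proof -
    have "B \<in> P" "B \<subseteq> verts T1 \<union> verts T2" using B unfolding dep_nodes_def verts_T by auto
    then have "B \<in> dep_nodes P T1 \<or> B \<in> dep_nodes P T2" using side unfolding dep_nodes_def by blast
    then show ?thesis using A B1 by blast
  qed
  show ?thesis unfolding irreducible_tree_def dep_connected_def MT E_def[symmetric]
  proof (intro ballI)
    fix B1 B2 assume "B1 \<in> dep_nodes P T" "B2 \<in> dep_nodes P T"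
    then show "(B1, B2) \<in> (E \<union> E\<inverse>)\<^sup>*" using all R_join by metis
  qed
qed

end



context part begin

lemma finP: "finite P"
proof -
  have "P \<subseteq> Pow {1..r}" using blockD by auto
  then show ?thesis using finite_subset by blast
qed

lemma Max_inj: "inj_on Max P"
  by (rule inj_onI) (metis Max_block block_of_Max)

abbreviation "L \<equiv> sorted_list_of_set (Max ` P)"

lemma L_props: "length L = card P" "sorted_wrt (<) L" "set L = Max ` P"
  using finP Max_inj by (auto simp: card_image)

lemma mu_in: "1 \<le> i \<Longrightarrow> i \<le> card P \<Longrightarrow> mu P i \<in> Max ` P"
  unfolding mu_def using L_props by (metis Suc_le_eq Suc_pred' nth_mem not_one_le_zero less_le_trans zero_less_one)

lemma mu_mono: "1 \<le> i \<Longrightarrow> i < j \<Longrightarrow> j \<le> card P \<Longrightarrow> mu P i < mu P j"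
  unfolding mu_def using L_props sorted_wrt_nth_less[OF L_props(2), of "i - 1" "j - 1"] by simp

lemma mu_surj: "m \<in> Max ` P \<Longrightarrow> \<exists>i. 1 \<le> i \<and> i \<le> card P \<and> mu P i = m"
proof -
  assume "m \<in> Max ` P"
  then obtain n where n: "n < length L" "L ! n = m" using L_props(3) by (metis in_set_conv_nth)
  then show ?thesis unfolding mu_def using L_props(1) by (intro exI[of _ "Suc n"]) auto
qed

lemma blk: "1 \<le> i \<Longrightarrow> i \<le> card P \<Longrightarrow> blk P i \<in> P \<and> Max (blk P i) = mu P i"
proof -
  assume i: "1 \<le> i" "i \<le> card P"
  obtain B where B: "B \<in> P" "Max B = mu P i" using mu_in[OF i] by auto
  have "blk P i = B" unfolding blk_def
  proof (rule the_equality)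
    show "B \<in> P \<and> Max B = mu P i" using B by simp
    fix B' assume "B' \<in> P \<and> Max B' = mu P i"
    then show "B' = B" using B Max_inj inj_onD by metis
  qed
  then show ?thesis using B by simp
qed

lemma blk_disj: "1 \<le> i \<Longrightarrow> i \<le> card P \<Longrightarrow> 1 \<le> j \<Longrightarrow> j \<le> card P \<Longrightarrow> i \<noteq> j \<Longrightarrow>
  blk P i \<inter> blk P j = {}"
proof -
  assume a: "1 \<le> i" "i \<le> card P" "1 \<le> j" "j \<le> card P" "i \<noteq> j"
  then have "mu P i \<noteq> mu P j" using mu_mono by (metis nat_neq_iff)
  then have "blk P i \<noteq> blk P j" using blk a by metis
  then show ?thesis using block_disj blk a by blast
qed

lemma cover: "x \<in> {1..r} \<Longrightarrow> \<exists>l. 1 \<le> l \<and> l \<le> card P \<and> x \<in> blk P l"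
proof -
  assume "x \<in> {1..r}"
  then have "x \<in> \<Union>P" using partition_onD1[OF part, symmetric] by simp
  then obtain B where B: "B \<in> P" "x \<in> B" by blast
  obtain l where l: "1 \<le> l" "l \<le> card P" "mu P l = Max B" using mu_surj B by blast
  have "blk P l = B" using blk[OF l(1,2)] l(3) B Max_inj by (metis inj_onD)
  then show ?thesis using l B by blast
qed

lemma mu_le_r: "1 \<le> i \<Longrightarrow> i \<le> card P \<Longrightarrow> mu P i \<le> r"
  using mu_in blockD Max_block by fastforce

lemma chain_inc: "B \<in> P \<Longrightarrow> inc_tree (chain_tree B)"
proof -
  assume B: "B \<in> P"
  have f: "finite B" "B \<noteq> {}" "B \<subseteq> {1..r}" using blockD[OF B] by auto
  have s: "Max {y \<in> B. y < x} \<in> B \<and> Max {y \<in> B. y < x} < x" if "x \<in> B" "x \<noteq> Min B" for x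
  proof -
    have "{y \<in> B. y < x} \<noteq> {}" using that f Min_le[OF f(1)] Min_in[OF f(1,2)]
      by (metis (mono_tags, lifting) empty_iff le_neq_implies_less mem_Collect_eq)
    then have "Max {y \<in> B. y < x} \<in> {y \<in> B. y < x}" using f by (intro Max_in) auto
    then show ?thesis by auto
  qed
  show ?thesis unfolding inc_tree_def chain_tree_def verts_def par_def using f s by auto
qed

lemma chain_ancs: "B \<in> P \<Longrightarrow> x \<in> B \<Longrightarrow> ancs (chain_tree B) x = {y \<in> B. y \<le> x}"
  by (rule ancs_chain[OF chain_inc]) (auto simp: chain_tree_def verts_def par_def dest: blockD intro!: Min_in)

lemma chain_pi: "B \<in> P \<Longrightarrow> pi_increasing P (chain_tree B)"
proof -
  assume B: "B \<in> P"
  have V: "verts (chain_tree B) = B" by (simp add: chain_tree_def verts_def)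
  have sub: "B' \<in> P \<Longrightarrow> B' \<subseteq> B \<Longrightarrow> B' = B" for B'
    using blockD block_disj B by blast
  have "i \<in> ancs (chain_tree B) j" if "B' \<in> P" "B' \<subseteq> B" "i \<in> B'" "j \<in> B'" "i < j" for B' i j
  proof -
    have "B' = B" using sub that by blast
    then show ?thesis using chain_ancs[OF B] that by auto
  qed
  then show ?thesis unfolding pi_increasing_def is_ancestor_def V
    using chain_inc[OF B] sub B by auto
qed

lemma chain_irr: "B \<in> P \<Longrightarrow> irreducible_tree P (chain_tree B)"
proof -
  assume B: "B \<in> P"
  have V: "verts (chain_tree B) = B" by (simp add: chain_tree_def verts_def)
  have sub: "B' \<in> P \<Longrightarrow> B' \<subseteq> B \<Longrightarrow> B' = B" for B'
    using blockD block_disj B by blast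
  show ?thesis unfolding irreducible_tree_def dep_connected_def dep_nodes_def V using sub by auto
qed

end

locale part2 = part +
  assumes one: "{1} \<in> P" and r2: "r \<ge> 2"
begin

lemma k2: "2 \<le> card P"
proof -
  have "r \<in> \<Union>P" using partition_onD1[OF part, symmetric] r2 by simp
  then obtain B where B: "B \<in> P" "r \<in> B" by blast
  then have "B \<noteq> {1}" using r2 by auto
  then have "{B, {1}} \<subseteq> P" "card {B, {1}} = 2" using B one by auto
  then show ?thesis using card_mono[OF finP] by metis
qed

lemma mu1: "mu P 1 = 1"
proof -
  have "1 \<in> Max ` P" using one by force
  then obtain i where i: "1 \<le> i" "i \<le> card P" "mu P i = 1" using mu_surj by blast
  have "mu P 1 \<le> mu P i" using mu_mono[of 1 i] i by (cases "i = 1") auto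
  moreover have "mu P 1 \<ge> 1" using mu_in[of 1] k2 blockD Max_block by fastforce
  ultimately show ?thesis using i by simp
qed

lemma blk1: "blk P 1 = {1}"
  using blk[of 1] k2 mu1 one Max_inj by (metis Max_singleton inj_onD le_refl one_le_numeral order_trans)

end



definition InvT :: "nat set set \<Rightarrow> nat \<Rightarrow> nat \<Rightarrow> (nat \<Rightarrow> tree) \<Rightarrow> nat \<Rightarrow> bool \<Rightarrow> bool" where
 "InvT P r i tau nu fl \<longleftrightarrow>
   (\<forall>j. i \<le> j \<and> j \<le> card P \<longrightarrow> pi_increasing P (tau j) \<and> irreducible_tree P (tau j) \<and>
        Max (verts (tau j)) = mu P j) \<and>
   pi_increasing P (tau 1) \<and> (\<forall>x \<in> verts (tau 1). x < mu P i) \<and> nu \<in> verts (tau 1) \<and>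
   (\<forall>j. i \<le> j \<and> j \<le> card P \<longrightarrow> verts (tau 1) \<inter> verts (tau j) = {}) \<and>
   (\<forall>j j'. i \<le> j \<and> j < j' \<and> j' \<le> card P \<longrightarrow> verts (tau j) \<inter> verts (tau j') = {}) \<and>
   (\<forall>x \<in> {1..r}. x \<in> verts (tau 1) \<or> (\<exists>j. i \<le> j \<and> j \<le> card P \<and> x \<in> verts (tau j))) \<and>
   (fl \<longrightarrow> reducible_tree P (tau 1))"

lemma input_stage_2: "input_stage P c 2 = init_state P"
  by (simp add: input_stage_def)

lemma input_stage_Suc: "2 \<le> i \<Longrightarrow> input_stage P c (Suc i) = stage P c (input_stage P c i) i"
  by (simp add: input_stage_def)

context part2 begin

lemma Max_mem: "pi_increasing P T \<Longrightarrow> Max (verts T) \<in> verts T"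
  using inc_treeD(1,2)[OF pi_inc] by (intro Max_in) auto

lemma Max_ge: "pi_increasing P T \<Longrightarrow> x \<in> verts T \<Longrightarrow> x \<le> Max (verts T)"
  using inc_treeD(1)[OF pi_inc] by auto

lemma Inv_init: "InvT P r 2 (fst (init_state P)) 1 False"
proof -
  let ?tau = "\<lambda>l. chain_tree (blk P l)"
  have V: "verts (?tau l) = blk P l" for l by (simp add: chain_tree_def verts_def)
  have a: "pi_increasing P (?tau j) \<and> irreducible_tree P (?tau j) \<and> Max (verts (?tau j)) = mu P j"
    if "2 \<le> j" "j \<le> card P" for j
    using chain_pi chain_irr blk[of j] that V by simp
  have b: "pi_increasing P (?tau 1)" using chain_pi blk[of 1] k2 by simp
  have c: "\<forall>x \<in> verts (?tau 1). x < mu P 2" using blk1 mu1 mu_mono[of 1 2] k2 by (simp add: chain_tree_def verts_def)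
  have d: "1 \<in> verts (?tau 1)" using blk1 by (simp add: chain_tree_def verts_def)
  have e: "verts (?tau 1) \<inter> verts (?tau j) = {}" if "2 \<le> j" "j \<le> card P" for j
    using V blk_disj[of 1 j] that by simp
  have f: "verts (?tau j) \<inter> verts (?tau j') = {}" if "2 \<le> j" "j < j'" "j' \<le> card P" for j j'
    using V blk_disj[of j j'] that by simp
  have g: "x \<in> verts (?tau 1) \<or> (\<exists>j. 2 \<le> j \<and> j \<le> card P \<and> x \<in> verts (?tau j))" if x: "x \<in> {1..r}" for x
  proof -
    obtain l where l: "1 \<le> l" "l \<le> card P" "x \<in> blk P l" using cover[OF x] by blast
    then show ?thesis using V by (cases "l = 1") auto
  qed
  show ?thesis unfolding InvT_def init_state_def fst_conv using a b c d e f g by blast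
qed

lemma Inv_step:
  assumes I: "InvT P r i tau nu fl" and i: "2 \<le> i" "i < card P" and cC: "in_C P c"
  shows "case stage P c (tau, nu, fl) i of (tau', nu', fl') \<Rightarrow> InvT P r (Suc i) tau' nu' fl'"
proof -
  let ?k = "card P"
  note I' = I[unfolded InvT_def]
  have ai: "pi_increasing P (tau i)" "irreducible_tree P (tau i)" "Max (verts (tau i)) = mu P i"
    using I' i by auto
  have a1: "pi_increasing P (tau 1)" "\<forall>x \<in> verts (tau 1). x < mu P i" "nu \<in> verts (tau 1)"
    using I' by auto
  have dj1: "verts (tau 1) \<inter> verts (tau j) = {}" if "i \<le> j" "j \<le> ?k" for j using I' that by blast
  have djj: "verts (tau j) \<inter> verts (tau j') = {}" if "i \<le> j" "j < j'" "j' \<le> ?k" for j j'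
    using I' that by blast
  have cov: "x \<in> verts (tau 1) \<or> (\<exists>j. i \<le> j \<and> j \<le> ?k \<and> x \<in> verts (tau j))" if "x \<in> {1..r}" for x
    using I' that by blast
  have mui: "mu P i \<in> verts (tau i)" using Max_mem[OF ai(1)] ai(3) by simp
  have mlt: "mu P i < mu P (Suc i)" using mu_mono[of i "Suc i"] i by simp
  have ci: "1 \<le> c i" "c i \<le> mu P i" using cC i unfolding in_C_def by auto
  have cir: "c i \<in> {1..r}" using ci mu_le_r[of i] i by auto
  have leMi: "x \<le> mu P i" if "x \<in> verts (tau i)" for x using Max_ge[OF ai(1) that] ai(3) by simp
  show ?thesis
  proof (cases "c i \<in> verts (tau 1) \<or> c i \<in> verts (tau i)")
    case True
    then have st: "stage P c (tau, nu, fl) i = (tau(1 := spl (tau i) (mu P i) (tau 1) nu), c i, True)"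
      unfolding stage_def by simp
    interpret S: psplice "tau i" "mu P i" "tau 1" nu r P
      using pi_inc[OF ai(1)] pi_inc[OF a1(1)] dj1[of i] i mui a1 ai part
      by unfold_locales (auto simp: part_def)
    let ?tau = "tau(1 := spl (tau i) (mu P i) (tau 1) nu)"
    have mx: "mu P i = Max (verts (tau i) \<union> verts (tau 1))"
      using mui leMi a1(2) inc_treeD(1)[OF pi_inc[OF ai(1)]] inc_treeD(1)[OF pi_inc[OF a1(1)]]
      by (intro Max_eqI[symmetric]) auto
    have p1: "pi_increasing P (?tau j) \<and> irreducible_tree P (?tau j) \<and> Max (verts (?tau j)) = mu P j"
      if j: "Suc i \<le> j \<and> j \<le> ?k" for j
    proof -
      have "j \<noteq> 1" "i \<le> j" using j i by auto
      then show ?thesis using I' j by simp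
    qed
    have p2: "pi_increasing P (?tau 1)" using S.pi_T by simp
    have p3: "x < mu P (Suc i)" if "x \<in> verts (?tau 1)" for x
      using that S.verts_T leMi a1(2) mlt by fastforce
    have p4: "c i \<in> verts (?tau 1)" using S.verts_T True by auto
    have p5: "verts (?tau 1) \<inter> verts (?tau j) = {}" if j: "Suc i \<le> j \<and> j \<le> ?k" for j
      using j i S.verts_T dj1[of j] djj[of i j] by auto
    have p6: "verts (?tau j) \<inter> verts (?tau j') = {}" if "Suc i \<le> j \<and> j < j' \<and> j' \<le> ?k" for j j'
      using that i djj[of j j'] by auto
    have p7: "x \<in> verts (?tau 1) \<or> (\<exists>j. Suc i \<le> j \<and> j \<le> ?k \<and> x \<in> verts (?tau j))"
      if x: "x \<in> {1..r}" for x
    proof (cases "x \<in> verts (tau 1) \<or> x \<in> verts (tau i)")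
      case True
      then show ?thesis using S.verts_T by auto
    next
      case False
      then obtain j where jj: "i \<le> j" "j \<le> ?k" "x \<in> verts (tau j)" using cov[OF x] by blast
      then have "j \<noteq> i" using False by auto
      then have "Suc i \<le> j" "j \<noteq> 1" using jj i by auto
      then show ?thesis using jj by (intro disjI2 exI[of _ j]) auto
    qed
    have p8: "reducible_tree P (?tau 1)" using S.reducible[OF mx] by simp
    have "InvT P r (Suc i) ?tau (c i) True"
      unfolding InvT_def using p1 p2 p3 p4 p5 p6 p7 p8 by blast
    then show ?thesis using st by simp
  next
    case False
    obtain j0 where j0: "i \<le> j0" "j0 \<le> ?k" "c i \<in> verts (tau j0)" using cov[OF cir] False by blast
    have ij0: "i < j0" using j0 False by (cases "i = j0") auto
    have lst: "(LEAST j. i < j \<and> c i \<in> verts (tau j)) = j0"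
    proof (rule Least_equality)
      show "i < j0 \<and> c i \<in> verts (tau j0)" using ij0 j0 by simp
      fix j assume j: "i < j \<and> c i \<in> verts (tau j)"
      show "j0 \<le> j"
      proof (rule ccontr)
        assume "\<not> j0 \<le> j"
        then show False using djj[of j j0] j j0 by auto
      qed
    qed
    have st: "stage P c (tau, nu, fl) i = (tau(j0 := spl (tau i) (mu P i) (tau j0) (c i)), nu, fl)"
      unfolding stage_def using False lst by (simp add: Let_def)
    have aj0: "pi_increasing P (tau j0)" "irreducible_tree P (tau j0)" "Max (verts (tau j0)) = mu P j0"
      using I' j0 by auto
    interpret S: psplice "tau i" "mu P i" "tau j0" "c i" r P
      using pi_inc[OF ai(1)] pi_inc[OF aj0(1)] djj[of i j0] ij0 j0 mui ai aj0 part
      by unfold_locales (auto simp: part_def)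
    let ?tau = "tau(j0 := spl (tau i) (mu P i) (tau j0) (c i))"
    have mlt0: "mu P i < mu P j0" using mu_mono[of i j0] ij0 j0 i by simp
    have cne: "c i \<noteq> mu P i" using False mui by auto
    have irr: "irreducible_tree P (spl (tau i) (mu P i) (tau j0) (c i))"
      using S.irreducible[OF ai(2) aj0(2) ai(3)[symmetric]] aj0(3) mlt0 ci cne by simp
    have mx0: "Max (verts (spl (tau i) (mu P i) (tau j0) (c i))) = mu P j0"
      unfolding S.verts_T
    proof (rule Max_eqI)
      show "finite (verts (tau i) \<union> verts (tau j0))" using S.finV .
      show "mu P j0 \<in> verts (tau i) \<union> verts (tau j0)" using Max_mem[OF aj0(1)] aj0(3) by simp
      fix y assume "y \<in> verts (tau i) \<union> verts (tau j0)"
      then show "y \<le> mu P j0" using leMi mlt0 Max_ge[OF aj0(1)] aj0(3) by fastforce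
    qed
    have t1: "?tau 1 = tau 1" using ij0 i by simp
    have q1: "pi_increasing P (?tau j) \<and> irreducible_tree P (?tau j) \<and> Max (verts (?tau j)) = mu P j"
      if j: "Suc i \<le> j \<and> j \<le> ?k" for j
    proof (cases "j = j0")
      case True
      then show ?thesis using S.pi_T irr mx0 by simp
    next
      case False
      then show ?thesis using I' j by auto
    qed
    have q3: "x < mu P (Suc i)" if "x \<in> verts (tau 1)" for x using that a1(2) mlt by fastforce
    have q5: "verts (tau 1) \<inter> verts (?tau j) = {}" if j: "Suc i \<le> j \<and> j \<le> ?k" for j
    proof (cases "j = j0")
      case True
      then show ?thesis using S.verts_T dj1[of i] dj1[of j0] i j0 by auto
    next
      case False
      then show ?thesis using dj1[of j] j by auto
    qed
    have q6: "verts (?tau j) \<inter> verts (?tau j') = {}" if jj: "Suc i \<le> j \<and> j < j' \<and> j' \<le> ?k" for j j'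
    proof (cases "j = j0")
      case True
      then show ?thesis using S.verts_T djj[of i j'] djj[of j j'] jj by auto
    next
      case False
      show ?thesis
      proof (cases "j' = j0")
        case True
        then show ?thesis using S.verts_T djj[of i j] djj[of j j'] jj \<open>j \<noteq> j0\<close> by auto
      next
        case False
        then show ?thesis using djj[of j j'] jj \<open>j \<noteq> j0\<close> by auto
      qed
    qed
    have q7: "x \<in> verts (tau 1) \<or> (\<exists>j. Suc i \<le> j \<and> j \<le> ?k \<and> x \<in> verts (?tau j))"
      if x: "x \<in> {1..r}" for x
    proof (cases "x \<in> verts (tau i)")
      case True
      then show ?thesis using S.verts_T ij0 j0 by (intro disjI2 exI[of _ j0]) auto
    next
      case False
      then consider "x \<in> verts (tau 1)" | j where "i \<le> j" "j \<le> ?k" "x \<in> verts (tau j)"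
        using cov[OF x] by blast
      then show ?thesis
      proof cases
        case (2 j)
        then have "Suc i \<le> j" using False by (cases "i = j") auto
        then show ?thesis using 2 S.verts_T by (intro disjI2 exI[of _ j]) auto
      qed simp
    qed
    have q8: "fl \<longrightarrow> reducible_tree P (tau 1)" using I' by blast
    have "InvT P r (Suc i) ?tau nu fl"
      unfolding InvT_def t1 using q1 a1 q3 q5 q6 q7 q8 by blast
    then show ?thesis using st by simp
  qed
qed

lemma Inv_all:
  assumes cC: "in_C P c" and i: "2 \<le> i"
  shows "i \<le> card P \<longrightarrow>
    (case input_stage P c i of (tau, nu, fl) \<Rightarrow> InvT P r i tau nu fl)"
  using i
proof (induction i rule: dec_induct)
  case base
  then show ?case using Inv_init input_stage_2[of P c] by (simp add: init_state_def)
next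
  case (step n)
  obtain tau nu fl where e: "input_stage P c n = (tau, nu, fl)" by (cases "input_stage P c n") auto
  show ?case
  proof
    assume n: "Suc n \<le> card P"
    have "InvT P r n tau nu fl" using step e n by simp
    from Inv_step[OF this step(1) _ cC] n
    show "case input_stage P c (Suc n) of (tau, nu, fl) \<Rightarrow> InvT P r (Suc n) tau nu fl"
      using input_stage_Suc[OF step(1), of P c] e by (simp add: split_beta)
  qed
qed

end



theorem proposition3p7:
  fixes r :: nat and P :: "nat set set" and c :: "nat \<Rightarrow> nat"
  assumes "r \<ge> 2"
    and "partition_on {1..r} P"
    and "{1} \<in> P"
    and "in_C P c"
  shows "(\<forall>l. 1 \<le> l \<and> l \<le> card P \<longrightarrow>
            pi_increasing P (fst (init_state P) l) \<and> irreducible_tree P (fst (init_state P) l))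
       \<and> (\<forall>i. 2 \<le> i \<and> i \<le> card P \<longrightarrow>
            (case input_stage P c i of (tau, nu, fl) \<Rightarrow>
               (\<forall>j. i \<le> j \<and> j \<le> card P \<longrightarrow>
                   pi_increasing P (tau j) \<and> irreducible_tree P (tau j) \<and> mu P j \<in> verts (tau j))
             \<and> (fl \<longrightarrow> pi_increasing P (tau 1) \<and> reducible_tree P (tau 1))))
       \<and> pi_increasing P (psi P c) \<and> reducible_tree P (psi P c)"
proof -
  interpret part2 r P using assms by unfold_locales auto
  have A: "pi_increasing P (fst (init_state P) l) \<and> irreducible_tree P (fst (init_state P) l)"
    if "1 \<le> l \<and> l \<le> card P" for l
    using blk[of l] that chain_pi chain_irr by (simp add: init_state_def)
  have B: "case input_stage P c i of (tau, nu, fl) \<Rightarrow>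
               (\<forall>j. i \<le> j \<and> j \<le> card P \<longrightarrow>
                   pi_increasing P (tau j) \<and> irreducible_tree P (tau j) \<and> mu P j \<in> verts (tau j))
             \<and> (fl \<longrightarrow> pi_increasing P (tau 1) \<and> reducible_tree P (tau 1))"
    if i: "2 \<le> i \<and> i \<le> card P" for i
  proof -
    obtain tau nu fl where e: "input_stage P c i = (tau, nu, fl)" by (cases "input_stage P c i") auto
    have I: "InvT P r i tau nu fl" using Inv_all[OF assms(4), of i] i e by simp
    have "pi_increasing P (tau j) \<and> irreducible_tree P (tau j) \<and> mu P j \<in> verts (tau j)"
      if "i \<le> j \<and> j \<le> card P" for j
      using I that Max_mem[of "tau j"] unfolding InvT_def by metis
    moreover have "fl \<longrightarrow> pi_increasing P (tau 1) \<and> reducible_tree P (tau 1)"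
      using I unfolding InvT_def by blast
    ultimately show ?thesis using e by simp
  qed
  obtain tau nu fl where e: "input_stage P c (card P) = (tau, nu, fl)"
    by (cases "input_stage P c (card P)") auto
  have I: "InvT P r (card P) tau nu fl" using Inv_all[OF assms(4), of "card P"] k2 e by simp
  note I' = I[unfolded InvT_def]
  have ak: "pi_increasing P (tau (card P))" "Max (verts (tau (card P))) = mu P (card P)"
    using I' by auto
  have a1: "pi_increasing P (tau 1)" "\<forall>x \<in> verts (tau 1). x < mu P (card P)" "nu \<in> verts (tau 1)"
    using I' by auto
  have dj: "verts (tau (card P)) \<inter> verts (tau 1) = {}" using I' by blast
  have mk: "mu P (card P) \<in> verts (tau (card P))" using Max_mem[OF ak(1)] ak(2) by simp
  interpret S: psplice "tau (card P)" "mu P (card P)" "tau 1" nu r P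
    using pi_inc[OF ak(1)] pi_inc[OF a1(1)] dj mk a1 ak part
    by unfold_locales (auto simp: part_def)
  have mx: "mu P (card P) = Max (verts (tau (card P)) \<union> verts (tau 1))"
    using mk Max_ge[OF ak(1)] ak(2) a1(2) S.finV
    by (intro Max_eqI[symmetric]) fastforce+
  have psi: "psi P c = spl (tau (card P)) (mu P (card P)) (tau 1) nu"
    using e by (simp add: psi_def Let_def)
  show ?thesis using A B S.pi_T S.reducible[OF mx] psi by auto
qed


end
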